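(* For all integers $m\ge 0$ and $s\ge 0$, every $(m,s)$-semibipartite directed graph is not $(m+2)$-solvable.
   Context: A directed graph $D=(V,E)$ has arcs $E \subseteq \{(u,v)\in V^2 : u \neq v\}$ (bidirectional pairs allowed; an undirected graph is identified with the directed graph having both arcs for each edge). $N^-(v)=\{u:(u,v)\in E\}$. For $q\ge2$ let $[q]=\{0,\dots,q-1\}$. A $D$-function over $[q]$ is a map $f=(f_v)_{v\in V}:[q]^V\to[q]^V$ with each $f_v(x)$ depending only on $(x_u)_{u\in N^-(v)}$. $D$ is $q$-solvable if some $D$-function $f$ over $[q]$ has the property that for every $x\in[q]^V$ there is $v$ with $f_v(x)=x_v$. A directed graph $D$ is $(m,s)$-semibipartite if its vertex set can be partitioned as $V=L\cup R$ with $|L|=m$, $|R|=s$, the induced subgraph $D[L]$ has no arcs, and the induced subgraph $D[R]$ is acyclic (contains no directed cycle). *)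

theory Defs
  imports Main "HOL-Library.FuncSet"
begin

definition digraph :: "'v set \<Rightarrow> ('v \<times> 'v) set \<Rightarrow> bool" where
  "digraph V E \<longleftrightarrow> E \<subseteq> V \<times> V \<and> (\<forall>u v. (u, v) \<in> E \<longrightarrow> u \<noteq> v)"

definition in_nbrs :: "('v \<times> 'v) set \<Rightarrow> 'v \<Rightarrow> 'v set" where
  "in_nbrs E v = {u. (u, v) \<in> E}"

definition configs :: "'v set \<Rightarrow> nat \<Rightarrow> ('v \<Rightarrow> nat) set" where
  "configs V q = (V \<rightarrow>\<^sub>E {0..<q})"

definition is_D_function :: "'v set \<Rightarrow> ('v \<times> 'v) set \<Rightarrow> nat \<Rightarrow> ('v \<Rightarrow> ('v \<Rightarrow> nat) \<Rightarrow> nat) \<Rightarrow> bool" where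
  "is_D_function V E q f \<longleftrightarrow>
     (\<forall>v\<in>V. \<forall>x\<in>configs V q. f v x \<in> {0..<q}) \<and>
     (\<forall>v\<in>V. \<forall>x\<in>configs V q. \<forall>y\<in>configs V q.
        (\<forall>u\<in>in_nbrs E v. x u = y u) \<longrightarrow> f v x = f v y)"

definition q_solvable :: "'v set \<Rightarrow> ('v \<times> 'v) set \<Rightarrow> nat \<Rightarrow> bool" where
  "q_solvable V E q \<longleftrightarrow>
     (\<exists>f. is_D_function V E q f \<and> (\<forall>x\<in>configs V q. \<exists>v\<in>V. f v x = x v))"

definition semibipartite :: "nat \<Rightarrow> nat \<Rightarrow> 'v set \<Rightarrow> ('v \<times> 'v) set \<Rightarrow> bool" where
  "semibipartite m s V E \<longleftrightarrow>
     (\<exists>L R. L \<inter> R = {} \<and> L \<union> R = V \<and> finite L \<and> finite R \<and> card L = m \<and> card R = s \<and>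
        E \<inter> (L \<times> L) = {} \<and> acyclic (E \<inter> (R \<times> R)))"

end

theory Submission
  imports Defs
begin

lemma avoid:
  fixes K :: "nat set"
  assumes "finite K" "card K \<le> m"
  shows "\<exists>c\<le>m. c \<notin> K"
proof (rule ccontr)
  assume "\<not> ?thesis"
  then have "{0..m} \<subseteq> K" by auto
  then have "card {0..m} \<le> card K" using assms(1) by (rule card_mono[rotated])
  then show False using assms(2) by simp
qed

lemma main:
  fixes L R :: "'v set" and E :: "('v \<times> 'v) set" and f :: "'v \<Rightarrow> ('v \<Rightarrow> nat) \<Rightarrow> nat"
  assumes "finite R" "card R = s" "L \<inter> R = {}" "finite L" "card L = m"
    "E \<subseteq> (L\<union>R)\<times>(L\<union>R)" "E \<inter> L\<times>L = {}" "acyclic (E\<inter>R\<times>R)"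
    "is_D_function (L\<union>R) E (m+2) f"
  shows "\<exists>c\<le>m. \<exists>x\<in>configs (L\<union>R) (m+2). (\<forall>l\<in>L. x l = c) \<and> (\<forall>v\<in>L\<union>R. f v x \<noteq> x v)"
  using assms
proof (induction s arbitrary: R E f)
  case 0
  then have R: "R = {}" by simp
  with 0 have E: "E = {}" by auto
  define x0 where "x0 = restrict (\<lambda>_. 0::nat) L"
  have x0: "x0 \<in> configs L (m+2)" unfolding x0_def configs_def by auto
  define K where "K = (\<lambda>l. f l x0) ` L"
  have "finite K" "card K \<le> m" unfolding K_def using 0 card_image_le by auto
  then obtain c where c: "c \<le> m" "c \<notin> K" using avoid by blast
  define x where "x = restrict (\<lambda>_. c) L"
  have x: "x \<in> configs L (m+2)" unfolding x_def configs_def using c by auto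
  have nb: "in_nbrs E v = {}" for v using E unfolding in_nbrs_def by simp
  have DL: "is_D_function L E (m+2) f" using "0.prems"(9) R by simp
  have fx: "f v x = f v x0" if "v \<in> L" for v
  proof -
    have "\<forall>v\<in>L. \<forall>x\<in>configs L (m+2). \<forall>y\<in>configs L (m+2).
        (\<forall>u\<in>in_nbrs E v. x u = y u) \<longrightarrow> f v x = f v y"
      using DL unfolding is_D_function_def by (rule conjunct2)
    then have "(\<forall>u\<in>in_nbrs E v. x u = x0 u) \<longrightarrow> f v x = f v x0"
      using that x x0 by blast
    then show ?thesis unfolding nb by blast
  qed
  have xL: "\<forall>l\<in>L. x l = c" unfolding x_def by auto
  have A: "\<forall>v\<in>L. f v x \<noteq> x v"
  proof
    fix v assume v: "v \<in> L"
    have "f v x0 \<in> K" unfolding K_def using v by blast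
    then have "f v x \<noteq> c" using fx[OF v] c(2) by auto
    then show "f v x \<noteq> x v" using xL v by simp
  qed
  show ?case unfolding R Un_empty_right using x c A xL by blast
next
  case (Suc s)
  let ?q = "m+2"
  have fin: "finite (E\<inter>R\<times>R)" using Suc.prems(1) by auto
  have wf: "wf (E\<inter>R\<times>R)" using finite_acyclic_wf[OF fin Suc.prems(8)] .
  have "R \<noteq> {}" using Suc.prems(2) by auto
  then obtain r0 where r0: "r0 \<in> R" and min: "\<And>y. (y, r0) \<in> E\<inter>R\<times>R \<Longrightarrow> y \<notin> R"
    using wfE_min[OF wf] by (metis ex_in_conv)
  have nbL: "in_nbrs E r0 \<subseteq> L" using min r0 Suc.prems(6) unfolding in_nbrs_def by auto
  define cfg where "cfg c = restrict (\<lambda>v. if v \<in> L then c else 0) (L\<union>R)" for c :: nat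
  have cfg: "cfg c \<in> configs (L\<union>R) ?q" if "c \<le> m" for c
    unfolding cfg_def configs_def using that by auto
  define K where "K = (\<lambda>c. f r0 (cfg c)) ` {0..m}"
  have fK: "finite K" and cK: "card K \<le> m+1" unfolding K_def using card_image_le[of "{0..m}"] by auto
  obtain v0 where "v0 \<le> m+1" "v0 \<notin> K" using avoid[OF fK cK] by blast
  then have v0: "v0 < ?q" "v0 \<notin> K" by auto
  define R' where "R' = R - {r0}"
  define E' where "E' = E \<inter> (L\<union>R')\<times>(L\<union>R')"
  define f' where "f' v x = f v (x(r0 := v0))" for v x
  have VV: "L \<union> R = insert r0 (L \<union> R')" using r0 unfolding R'_def by auto
  have r0n: "r0 \<notin> L \<union> R'" using r0 Suc.prems(3) unfolding R'_def by auto
  have upd: "x(r0 := v0) \<in> configs (L\<union>R) ?q" if "x \<in> configs (L\<union>R') ?q" for x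
    using that v0(1) unfolding configs_def VV by (auto intro: PiE_fun_upd)
  have Df: "is_D_function (L\<union>R) E ?q f" using Suc.prems(9) .
  have Df': "is_D_function (L\<union>R') E' ?q f'"
    unfolding is_D_function_def
  proof (intro conjI ballI impI)
    fix v x assume "v \<in> L\<union>R'" "x \<in> configs (L\<union>R') ?q"
    then show "f' v x \<in> {0..<?q}" using Df upd unfolding is_D_function_def f'_def VV by auto
  next
    fix v x y assume v: "v \<in> L\<union>R'" and x: "x \<in> configs (L\<union>R') ?q" and y: "y \<in> configs (L\<union>R') ?q"
      and agree: "\<forall>u\<in>in_nbrs E' v. x u = y u"
    have "\<forall>u\<in>in_nbrs E v. (x(r0:=v0)) u = (y(r0:=v0)) u"
    proof
      fix u assume u: "u \<in> in_nbrs E v"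
      show "(x(r0:=v0)) u = (y(r0:=v0)) u"
      proof (cases "u = r0")
        case False
        then have "u \<in> L\<union>R'" using u Suc.prems(6) unfolding in_nbrs_def R'_def by auto
        then have "u \<in> in_nbrs E' v" using u v unfolding in_nbrs_def E'_def by auto
        then show ?thesis using agree False by auto
      qed simp
    qed
    then show "f' v x = f' v y" using Df upd[OF x] upd[OF y] v unfolding is_D_function_def f'_def VV
      by blast
  qed
  have IH: "\<exists>c\<le>m. \<exists>x\<in>configs (L\<union>R') ?q. (\<forall>l\<in>L. x l = c) \<and> (\<forall>v\<in>L\<union>R'. f' v x \<noteq> x v)"
  proof (rule Suc.IH)
    show "finite R'" using Suc.prems(1) unfolding R'_def by auto
    show "card R' = s" using Suc.prems(1,2) r0 unfolding R'_def by auto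
    show "L \<inter> R' = {}" using Suc.prems(3) unfolding R'_def by auto
    show "E' \<subseteq> (L\<union>R')\<times>(L\<union>R')" unfolding E'_def by auto
    show "E' \<inter> L\<times>L = {}" using Suc.prems(7) unfolding E'_def by auto
    show "acyclic (E'\<inter>R'\<times>R')"
      by (rule acyclic_subset[OF Suc.prems(8)]) (auto simp: E'_def R'_def)
  qed (use Suc.prems Df' in auto)
  then obtain c x' where c: "c \<le> m" and x': "x' \<in> configs (L\<union>R') ?q"
    and xc: "\<forall>l\<in>L. x' l = c" and nf: "\<forall>v\<in>L\<union>R'. f' v x' \<noteq> x' v" by blast
  define x where "x = x'(r0 := v0)"
  have x: "x \<in> configs (L\<union>R) ?q" using upd[OF x'] unfolding x_def .
  have xL: "\<forall>l\<in>L. x l = c" using xc r0n unfolding x_def by auto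
  have "f r0 x = f r0 (cfg c)"
  proof -
    have "\<forall>u\<in>in_nbrs E r0. x u = cfg c u" using nbL xL unfolding cfg_def by auto
    then show ?thesis using Df x cfg[OF c] r0 unfolding is_D_function_def by blast
  qed
  then have "f r0 x \<noteq> x r0" using v0 c unfolding K_def x_def by auto
  moreover have "\<forall>v\<in>L\<union>R'. f v x \<noteq> x v" using nf r0n unfolding x_def f'_def by auto
  ultimately have "\<forall>v\<in>L\<union>R. f v x \<noteq> x v" unfolding VV by auto
  then show ?case using c x xL by blast
qed

theorem theorem10:
  fixes V :: "'v set" and E :: "('v \<times> 'v) set" and m s :: nat
  assumes "digraph V E"
    and "semibipartite m s V E"
  shows "\<not> q_solvable V E (m + 2)"
proof
  assume "q_solvable V E (m + 2)"
  then obtain f where f: "is_D_function V E (m+2) f" and fp: "\<forall>x\<in>configs V (m+2). \<exists>v\<in>V. f v x = x v"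
    unfolding q_solvable_def by blast
  obtain L R where LR: "L \<inter> R = {}" "L \<union> R = V" "finite L" "finite R" "card L = m" "card R = s"
    "E \<inter> L\<times>L = {}" "acyclic (E\<inter>R\<times>R)"
    using assms(2) unfolding semibipartite_def by blast
  have "E \<subseteq> (L\<union>R)\<times>(L\<union>R)" using assms(1) LR(2) unfolding digraph_def by auto
  from main[OF LR(4) LR(6) LR(1) LR(3) LR(5) this LR(7) LR(8), of f] f LR(2)
  obtain x where "x \<in> configs V (m+2)" "\<forall>v\<in>V. f v x \<noteq> x v" by blast
  with fp show False by auto
qed

end
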